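(* Let $\mathcal F=\{f\in C(\mathcal X):\|f\|_\infty\le\log(3/2),\ L_f=0\}$. Then $e^{\mathrm{ad\text{-}stoch}}_n(\mathcal F,S_{\mathrm{samp}},D_{\sup\text{-}\log})=0$ for all $n\ge1$.
   Context: $\mathcal X=[0,1]^d$ with Lebesgue measure. For bounded measurable $f$: $Z_f=\int_{\mathcal X}e^f dx$, $L_f=\log Z_f$, $P_f$ the distribution with density $e^f/Z_f$; $S_{\mathrm{samp}}(f)=P_f$. $D_{\sup\text{-}\log}(P,Q)=\|\log(dP/dQ)\|_\infty$ ($\infty$ unless mutually absolutely continuous). Stochastic sampling algorithms: given a probability space $(\Omega,P_\Omega)$, a random sample has the form $X_f(\omega)=\tilde\phi(N(f,\omega),\omega)\in\mathcal X$, where $N(f,\omega)=(f(x_1),\dots,f(x_n))$ with each $x_k$ allowed to depend on $\omega$ and on $f(x_1),\dots,f(x_{k-1})$; $\tilde S(f)$ is the distribution of $X_f(\omega)$, $\omega\sim P_\Omega$. $\mathcal A^{\mathrm{ad\text{-}stoch}}_n$ is the set of all such $\tilde S$, and $e^{\mathrm{ad\text{-}stoch}}_n(\mathcal F,S_{\mathrm{samp}},D)=\inf_{\tilde S\in\mathcal A^{\mathrm{ad\text{-}stoch}}_n}\sup_{f\in\mathcal F}D(P_f,\tilde S(f))$. *)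

theory Defs
  imports "HOL-Probability.Probability"
begin

text \<open>The domain X = [0,1]^d, as the unit box of a Euclidean space 'a (d = DIM('a)),
  carrying the Borel sigma-algebra and Lebesgue measure.\<close>

definition Xdom :: "'a::euclidean_space set" where
  "Xdom = cbox 0 One"

definition Xmeas :: "'a::euclidean_space measure" where
  "Xmeas = restrict_space lborel Xdom"

definition Zf :: "('a::euclidean_space \<Rightarrow> real) \<Rightarrow> real" where
  "Zf f = (\<integral>x. exp (f x) \<partial>Xmeas)"

definition Lf :: "('a::euclidean_space \<Rightarrow> real) \<Rightarrow> real" where
  "Lf f = ln (Zf f)"

definition Pf :: "('a::euclidean_space \<Rightarrow> real) \<Rightarrow> 'a measure" where
  "Pf f = density Xmeas (\<lambda>x. ennreal (exp (f x) / Zf f))"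

definition S_samp :: "('a::euclidean_space \<Rightarrow> real) \<Rightarrow> 'a measure" where
  "S_samp f = Pf f"

text \<open>sup-log distance: ess-sup of |log (dP/dQ)| if P, Q mutually absolutely continuous,
  infinity otherwise.  (RN_deriv Q P is dP/dQ.)\<close>
definition D_sup_log :: "'a measure \<Rightarrow> 'a measure \<Rightarrow> ereal" where
  "D_sup_log P Q =
     (if absolutely_continuous Q P \<and> absolutely_continuous P Q
      then esssup Q (\<lambda>x. ereal \<bar>ln (enn2real (RN_deriv Q P x))\<bar>)
      else \<infinity>)"

text \<open>Adaptive information: psi k omega [y_1..y_k] is the (k+1)-st node, chosen depending on
  omega and the previously observed values.\<close>
fun info :: "(nat \<Rightarrow> (nat \<Rightarrow> real) \<Rightarrow> real list \<Rightarrow> 'a) \<Rightarrow> ('a \<Rightarrow> real) \<Rightarrow> (nat \<Rightarrow> real) \<Rightarrow> nat \<Rightarrow> real list" where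
  "info psi f \<omega> 0 = []"
| "info psi f \<omega> (Suc k) = (let ys = info psi f \<omega> k in ys @ [f (psi k \<omega> ys)])"

definition alg_sample ::
  "nat \<Rightarrow> (nat \<Rightarrow> (nat \<Rightarrow> real) \<Rightarrow> real list \<Rightarrow> 'a) \<Rightarrow> (real list \<Rightarrow> (nat \<Rightarrow> real) \<Rightarrow> 'a) \<Rightarrow> ('a \<Rightarrow> real) \<Rightarrow> (nat \<Rightarrow> real) \<Rightarrow> 'a" where
  "alg_sample n psi phi f \<omega> = phi (info psi f \<omega> n) \<omega>"

definition ad_stoch_algs ::
  "nat \<Rightarrow> ((nat \<Rightarrow> real) measure \<times> (nat \<Rightarrow> (nat \<Rightarrow> real) \<Rightarrow> real list \<Rightarrow> 'a::euclidean_space) \<times> (real list \<Rightarrow> (nat \<Rightarrow> real) \<Rightarrow> 'a)) set" where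
  "ad_stoch_algs n = {(\<Omega>, psi, phi).
      prob_space \<Omega> \<and>
      (\<forall>k \<omega> ys. psi k \<omega> ys \<in> Xdom) \<and>
      (\<forall>ys \<omega>. phi ys \<omega> \<in> Xdom) \<and>
      (\<forall>f. f \<in> borel_measurable borel \<and> bounded (range f) \<longrightarrow>
            alg_sample n psi phi f \<in> measurable \<Omega> Xmeas)}"

definition alg_dist ::
  "nat \<Rightarrow> (nat \<Rightarrow> real) measure \<Rightarrow> (nat \<Rightarrow> (nat \<Rightarrow> real) \<Rightarrow> real list \<Rightarrow> 'a::euclidean_space) \<Rightarrow> (real list \<Rightarrow> (nat \<Rightarrow> real) \<Rightarrow> 'a) \<Rightarrow> ('a \<Rightarrow> real) \<Rightarrow> 'a measure" where
  "alg_dist n \<Omega> psi phi f = distr \<Omega> Xmeas (alg_sample n psi phi f)"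

definition e_ad_stoch ::
  "nat \<Rightarrow> ('a::euclidean_space \<Rightarrow> real) set \<Rightarrow> (('a \<Rightarrow> real) \<Rightarrow> 'a measure) \<Rightarrow> ('a measure \<Rightarrow> 'a measure \<Rightarrow> ereal) \<Rightarrow> ereal" where
  "e_ad_stoch n F S D =
     (INF A \<in> ad_stoch_algs n. case A of (\<Omega>, psi, phi) \<Rightarrow>
        (SUP f \<in> F. D (S f) (alg_dist n \<Omega> psi phi f)))"

definition F_prop11 :: "('a::euclidean_space \<Rightarrow> real) set" where
  "F_prop11 = {f. continuous_on Xdom f \<and> (\<forall>x\<in>Xdom. \<bar>f x\<bar> \<le> ln (3/2)) \<and> Lf f = 0}"

end

theory Submission
  imports Defs
begin

lemma D_self: assumes "prob_space Q" shows "D_sup_log Q Q = 0"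
proof -
  interpret prob_space Q by fact
  have ac: "absolutely_continuous Q Q" by (simp add: absolutely_continuous_def)
  have "AE x in Q. 1 = RN_deriv Q Q x"
    by (rule RN_deriv_unique) (auto simp: density_1)
  then have ae: "AE x in Q. ereal \<bar>ln (enn2real (RN_deriv Q Q x))\<bar> \<le> 0"
    by eventually_elim (metis enn2real_1 ln_one abs_zero order_refl zero_ereal_def)
  have "esssup Q (\<lambda>x. ereal \<bar>ln (enn2real (RN_deriv Q Q x))\<bar>) \<le> 0"
    by (rule esssup_I[OF _ ae]) measurable
  moreover have "esssup Q (\<lambda>x. ereal \<bar>ln (enn2real (RN_deriv Q Q x))\<bar>) \<ge> esssup Q (\<lambda>x. 0)"
    by (rule esssup_mono) auto
  moreover have "esssup Q (\<lambda>x. 0::ereal) = 0" by (rule esssup_const) (simp add: emeasure_space_1)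
  ultimately show ?thesis unfolding D_sup_log_def using ac by simp
qed

lemma D_nonneg: assumes "prob_space Q" shows "D_sup_log P Q \<ge> 0"
proof -
  interpret prob_space Q by fact
  have "esssup Q (\<lambda>x. ereal \<bar>ln (enn2real (RN_deriv Q P x))\<bar>) \<ge> esssup Q (\<lambda>x. 0)"
    by (rule esssup_mono) auto
  moreover have "esssup Q (\<lambda>x. 0::ereal) = 0" by (rule esssup_const) (simp add: emeasure_space_1)
  ultimately show ?thesis unfolding D_sup_log_def by simp
qed


definition U01 :: "real measure" where "U01 = restrict_space lborel {0..1}"

definition MM :: "('a::euclidean_space \<times> 'a \<times> real) measure" where
  "MM = Xmeas \<Otimes>\<^sub>M (Xmeas \<Otimes>\<^sub>M U01)"

definition BB :: "nat \<Rightarrow> 'a::euclidean_space" where "BB = from_nat_into Basis"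

definition enc :: "'a::euclidean_space \<times> 'a \<times> real \<Rightarrow> nat \<Rightarrow> real" where
  "enc t = (\<lambda>i. case i of 0 \<Rightarrow> snd (snd t)
      | Suc j \<Rightarrow> if even j then fst t \<bullet> BB (j div 2) else fst (snd t) \<bullet> BB (j div 2))"

lemma range_BB: "range (BB :: nat \<Rightarrow> 'a::euclidean_space) = Basis"
  unfolding BB_def by (rule range_from_nat_into) (auto intro: countable_finite)

lemma inj_enc: "inj (enc :: 'a::euclidean_space \<times> 'a \<times> real \<Rightarrow> _)"
proof (rule injI)
  fix s t :: "'a \<times> 'a \<times> real"
  assume e: "enc s = enc t"
  obtain x z u where s: "s = (x,z,u)" by (cases s) auto
  obtain x' z' u' where t: "t = (x',z',u')" by (cases t) auto
  have "u = u'" using fun_cong[OF e, of 0] by (simp add: s t enc_def)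
  moreover have "x = x'"
  proof (rule euclidean_eqI)
    fix b :: 'a assume "b \<in> Basis"
    then obtain j where b: "b = BB j" using range_BB by (metis imageE)
    show "x \<bullet> b = x' \<bullet> b" using fun_cong[OF e, of "Suc (2*j)"] by (simp add: s t enc_def b)
  qed
  moreover have "z = z'"
  proof (rule euclidean_eqI)
    fix b :: 'a assume "b \<in> Basis"
    then obtain j where b: "b = BB j" using range_BB by (metis imageE)
    show "z \<bullet> b = z' \<bullet> b" using fun_cong[OF e, of "Suc (2*j+1)"] by (simp add: s t enc_def b)
  qed
  ultimately show "s = t" by (simp add: s t)
qed

lemma prob_U01: "prob_space U01"
  unfolding U01_def by (rule prob_spaceI) (simp add: space_restrict_space emeasure_restrict_space)

lemma zero_Xdom: "0 \<in> Xdom" unfolding Xdom_def by (simp add: mem_box)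

lemma prob_Xmeas: "prob_space (Xmeas :: 'a::euclidean_space measure)"
  unfolding Xmeas_def by (rule prob_spaceI) (simp add: space_restrict_space emeasure_restrict_space Xdom_def inner_Basis)

lemma prob_MM: "prob_space (MM :: ('a::euclidean_space \<times> 'a \<times> real) measure)"
proof -
  interpret X: prob_space "Xmeas :: 'a measure" by (rule prob_Xmeas)
  interpret U: prob_space U01 by (rule prob_U01)
  interpret XU: pair_prob_space "Xmeas :: 'a measure" U01 ..
  interpret XU': prob_space "(Xmeas :: 'a measure) \<Otimes>\<^sub>M U01" by (rule XU.prob_space_axioms)
  interpret P: pair_prob_space "Xmeas :: 'a measure" "(Xmeas :: 'a measure) \<Otimes>\<^sub>M U01" ..
  show ?thesis unfolding MM_def by (rule P.prob_space_axioms)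
qed


definition dec :: "(nat \<Rightarrow> real) \<Rightarrow> 'a::euclidean_space \<times> 'a \<times> real" where "dec = inv enc"
definition clip :: "'a::euclidean_space \<Rightarrow> 'a" where "clip x = (if x \<in> Xdom then x else 0)"
definition psiA :: "nat \<Rightarrow> (nat \<Rightarrow> real) \<Rightarrow> real list \<Rightarrow> 'a::euclidean_space" where
  "psiA k \<omega> ys = clip (fst (dec \<omega>))"
definition phiA :: "real list \<Rightarrow> (nat \<Rightarrow> real) \<Rightarrow> 'a::euclidean_space" where
  "phiA ys \<omega> = (case (dec \<omega> :: 'a \<times> 'a \<times> real) of (x, z, u) \<Rightarrow> clip (if u \<le> exp (hd ys) - 2/3 then x else z))"
definition OmA :: "'a::euclidean_space itself \<Rightarrow> (nat \<Rightarrow> real) measure" where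
  "OmA _ = embed_measure (MM :: ('a::euclidean_space \<times> 'a \<times> real) measure) enc"
definition hh :: "('a::euclidean_space \<Rightarrow> real) \<Rightarrow> 'a \<times> 'a \<times> real \<Rightarrow> 'a" where
  "hh f t = (if snd (snd t) \<le> exp (f (fst t)) - 2/3 then fst t else fst (snd t))"

lemma dec_enc[simp]: "dec (enc t) = t"
  unfolding dec_def by (rule inv_f_f[OF inj_enc])

lemma clip_Xdom[simp]: "clip x \<in> Xdom" by (simp add: clip_def zero_Xdom)

lemma info_rep: "info psiA f \<omega> n = replicate n (f (clip (fst (dec \<omega>))))"
  by (induction n) (simp_all add: psiA_def replicate_append_same)

lemma space_MM: "space MM = Xdom \<times> Xdom \<times> {0..1}"
  by (simp add: MM_def space_pair_measure Xmeas_def U01_def space_restrict_space)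

lemma sample_enc:
  assumes "n \<ge> 1" "t \<in> space MM"
  shows "alg_sample n psiA phiA f (enc t) = hh f t"
proof -
  obtain m where n: "n = Suc m" using assms(1) by (cases n) auto
  have "hd (replicate n y) = y" for y :: real by (simp add: n)
  then show ?thesis using assms(2)
    by (auto simp: alg_sample_def info_rep phiA_def hh_def clip_def space_MM)
qed

lemma hh_meas:
  assumes f: "f \<in> borel_measurable Xmeas"
  shows "hh f \<in> measurable MM Xmeas"
proof -
  have fst_m: "fst \<in> measurable MM Xmeas" unfolding MM_def by measurable
  have fs_m: "(\<lambda>t. fst (snd t)) \<in> measurable MM Xmeas" unfolding MM_def by measurable
  have u_m: "(\<lambda>t. snd (snd t)) \<in> measurable MM U01" unfolding MM_def by measurable
  have u_m': "(\<lambda>t. snd (snd t)) \<in> borel_measurable MM"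
  proof -
    have "(\<lambda>x::real. x) \<in> borel_measurable U01" unfolding U01_def
      by (intro measurable_restrict_space1) simp
    then show ?thesis using measurable_compose[OF u_m] by blast
  qed
  have fx: "(\<lambda>t. f (fst t)) \<in> borel_measurable MM" using measurable_compose[OF fst_m f] .
  have "{t \<in> space MM. snd (snd t) \<le> exp (f (fst t)) - 2/3} \<in> sets MM"
    using u_m' fx by measurable
  then show ?thesis unfolding hh_def
    by (rule measurable_If[OF fst_m fs_m])
qed


lemma prob_OmA: "prob_space (OmA TYPE('a::euclidean_space))"
proof (rule prob_spaceI)
  interpret prob_space "MM :: ('a \<times> 'a \<times> real) measure" by (rule prob_MM)
  have "emeasure (OmA TYPE('a)) (space (OmA TYPE('a))) = emeasure (embed_measure (MM :: ('a \<times> 'a \<times> real) measure) enc) (enc ` space (MM :: ('a \<times> 'a \<times> real) measure))"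
    by (simp add: OmA_def space_embed_measure)
  also have "\<dots> = emeasure (MM :: ('a \<times> 'a \<times> real) measure) (space MM)"
    by (rule emeasure_embed_measure_image[OF inj_enc sets.top])
  also have "\<dots> = 1" by (rule emeasure_space_1)
  finally show "emeasure (OmA TYPE('a)) (space (OmA TYPE('a))) = 1" .
qed

lemma sample_meas:
  assumes n: "n \<ge> 1" and f: "f \<in> borel_measurable (Xmeas :: 'a::euclidean_space measure)"
  shows "alg_sample n psiA phiA f \<in> measurable (OmA TYPE('a)) Xmeas"
  unfolding OmA_def
proof (rule measurable_embed_measure1)
  show "(\<lambda>x. alg_sample n psiA phiA f (enc x)) \<in> (MM :: ('a \<times> 'a \<times> real) measure) \<rightarrow>\<^sub>M Xmeas"
    using hh_meas[OF f] by (rule measurable_cong[THEN iffD2, rotated]) (simp add: sample_enc[OF n])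
qed

lemma dist_eq:
  assumes n: "n \<ge> 1" and f: "f \<in> borel_measurable (Xmeas :: 'a::euclidean_space measure)"
  shows "alg_dist n (OmA TYPE('a)) psiA phiA f = distr (MM :: ('a \<times> 'a \<times> real) measure) Xmeas (hh f)"
proof -
  have e: "(OmA TYPE('a)) = distr (MM :: ('a \<times> 'a \<times> real) measure) (OmA TYPE('a)) enc"
    unfolding OmA_def by (rule embed_measure_eq_distr[OF inj_enc])
  have em: "enc \<in> measurable (MM :: ('a \<times> 'a \<times> real) measure) (OmA TYPE('a))"
    unfolding OmA_def by (rule measurable_embed_measure2[OF inj_enc])
  have "alg_dist n (OmA TYPE('a)) psiA phiA f = distr (distr (MM :: ('a \<times> 'a \<times> real) measure) (OmA TYPE('a)) enc) Xmeas (alg_sample n psiA phiA f)"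
    unfolding alg_dist_def by (subst e) (rule refl)
  also have "\<dots> = distr (MM :: ('a \<times> 'a \<times> real) measure) Xmeas (alg_sample n psiA phiA f \<circ> enc)"
    by (rule distr_distr[OF sample_meas[OF n f] em])
  also have "\<dots> = distr (MM :: ('a \<times> 'a \<times> real) measure) Xmeas (hh f)"
    by (rule distr_cong) (simp_all add: sample_enc[OF n])
  finally show ?thesis .
qed

lemma alg_in:
  assumes n: "n \<ge> 1"
  shows "(OmA TYPE('a), psiA, phiA) \<in> (ad_stoch_algs n :: (_ \<times> _ \<times> (_ \<Rightarrow> _ \<Rightarrow> 'a::euclidean_space)) set)"
proof -
  have "alg_sample n psiA phiA f \<in> measurable (OmA TYPE('a)) (Xmeas :: 'a measure)"
    if "f \<in> borel_measurable borel" for f :: "'a \<Rightarrow> real"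
  proof (rule sample_meas[OF n])
    have "f \<in> borel_measurable lborel" using that by simp
    then show "f \<in> borel_measurable (Xmeas :: 'a measure)" unfolding Xmeas_def
      by (rule measurable_restrict_space1)
  qed
  moreover have "phiA ys \<omega> \<in> (Xdom :: 'a set)" for ys \<omega>
    unfolding phiA_def by (simp split: prod.split)
  ultimately show ?thesis
    unfolding ad_stoch_algs_def using prob_OmA[where 'a='a] by (auto simp: psiA_def)
qed


lemma U_if:
  assumes c: "0 \<le> c" "c \<le> 1"
  shows "(\<integral>\<^sup>+u. (if u \<le> c then a else b) \<partial>U01) = a * ennreal c + b * ennreal (1 - c)"
proof -
  have "(\<integral>\<^sup>+u. (if u \<le> c then a else b) \<partial>U01)
     = (\<integral>\<^sup>+u. (if u \<le> c then a else b) * indicator {0..1} u \<partial>lborel)"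
    unfolding U01_def by (rule nn_integral_restrict_space) simp
  also have "\<dots> = (\<integral>\<^sup>+u. a * indicator {0..c} u + b * indicator {c<..1} u \<partial>lborel)"
    using c by (intro nn_integral_cong) (auto simp: indicator_def)
  also have "\<dots> = (\<integral>\<^sup>+u. a * indicator {0..c} u \<partial>lborel) + (\<integral>\<^sup>+u. b * indicator {c<..1} u \<partial>lborel)"
    by (rule nn_integral_add) auto
  also have "\<dots> = a * ennreal c + b * ennreal (1 - c)"
    using c by (simp add: nn_integral_cmult_indicator)
  finally show ?thesis .
qed


lemma space_Xmeas: "space Xmeas = Xdom"
  by (simp add: Xmeas_def space_restrict_space)

lemma key:
  fixes f :: "'a::euclidean_space \<Rightarrow> real"
  assumes f[measurable]: "f \<in> borel_measurable Xmeas"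
    and b: "\<And>x. x \<in> Xdom \<Longrightarrow> 2/3 \<le> exp (f x) \<and> exp (f x) \<le> 5/3"
    and Z: "Zf f = 1"
  shows "distr (MM :: ('a \<times> 'a \<times> real) measure) Xmeas (hh f) = density Xmeas (\<lambda>x. ennreal (exp (f x) / Zf f))"
proof -
  interpret X: prob_space "Xmeas :: 'a measure" by (rule prob_Xmeas)
  interpret U: prob_space U01 by (rule prob_U01)
  interpret XU: pair_prob_space "Xmeas :: 'a measure" U01 ..
  interpret XU': prob_space "(Xmeas :: 'a measure) \<Otimes>\<^sub>M U01" by (rule XU.prob_space_axioms)
  interpret P: pair_prob_space "Xmeas :: 'a measure" "(Xmeas :: 'a measure) \<Otimes>\<^sub>M U01" ..
  define p where "p x = exp (f x) - 2/3" for x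
  have p[measurable]: "p \<in> borel_measurable Xmeas" unfolding p_def by measurable
  have p01: "0 \<le> p x" "p x \<le> 1" if "x \<in> Xdom" for x using b[OF that] by (auto simp: p_def)
  have u_m: "(\<lambda>u::real. u) \<in> borel_measurable U01" unfolding U01_def
    by (intro measurable_restrict_space1) simp
  define G where "G A x z u = (if u \<le> p x then indicator A x else indicator A z :: ennreal)" for A :: "'a set" and x z u
  show ?thesis
  proof (rule measure_eqI)
    show "sets (distr MM Xmeas (hh f)) = sets (density Xmeas (\<lambda>x. ennreal (exp (f x) / Zf f)))" by simp
  next
    fix A assume "A \<in> sets (distr MM Xmeas (hh f))"
    then have A[measurable]: "A \<in> sets Xmeas" by simp
    have hm: "hh f \<in> measurable (MM :: ('a \<times> 'a \<times> real) measure) Xmeas" by (rule hh_meas[OF f])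
    have Gm: "(\<lambda>t. G A (fst t) (fst (snd t)) (snd (snd t))) \<in> borel_measurable ((Xmeas :: 'a measure) \<Otimes>\<^sub>M (Xmeas \<Otimes>\<^sub>M U01))"
    proof -
      have "(\<lambda>t. snd (snd t)) \<in> borel_measurable ((Xmeas :: 'a measure) \<Otimes>\<^sub>M (Xmeas \<Otimes>\<^sub>M U01))"
        using u_m by measurable
      then show ?thesis unfolding G_def by measurable
    qed
    have "emeasure (distr (MM :: ('a \<times> 'a \<times> real) measure) Xmeas (hh f)) A = emeasure MM (hh f -` A \<inter> space MM)"
      by (rule emeasure_distr[OF hm A])
    also have "\<dots> = (\<integral>\<^sup>+t. indicator (hh f -` A \<inter> space MM) t \<partial>(MM :: ('a \<times> 'a \<times> real) measure))"
      using measurable_sets[OF hm A] by simp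
    also have "\<dots> = (\<integral>\<^sup>+t. G A (fst t) (fst (snd t)) (snd (snd t)) \<partial>(MM :: ('a \<times> 'a \<times> real) measure))"
      by (intro nn_integral_cong) (auto simp: G_def hh_def p_def indicator_def)
    also have "\<dots> = (\<integral>\<^sup>+x. (\<integral>\<^sup>+y. G A x (fst y) (snd y) \<partial>((Xmeas :: 'a measure) \<Otimes>\<^sub>M U01)) \<partial>Xmeas)"
      unfolding MM_def using sigma_finite_measure.nn_integral_fst[OF prob_space_imp_sigma_finite[OF XU.prob_space_axioms] Gm, symmetric] by simp
    also have "\<dots> = (\<integral>\<^sup>+x. indicator A x * ennreal (p x) + emeasure Xmeas A * ennreal (1 - p x) \<partial>Xmeas)"
    proof (intro nn_integral_cong)
      fix x assume x: "x \<in> space (Xmeas :: 'a measure)"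
      then have x': "x \<in> Xdom" by (simp add: space_Xmeas)
      have Gm2: "(\<lambda>y. G A x (fst y) (snd y)) \<in> borel_measurable ((Xmeas :: 'a measure) \<Otimes>\<^sub>M U01)"
        using u_m x unfolding G_def by measurable
      have "(\<integral>\<^sup>+y. G A x (fst y) (snd y) \<partial>((Xmeas :: 'a measure) \<Otimes>\<^sub>M U01))
          = (\<integral>\<^sup>+z. (\<integral>\<^sup>+u. G A x z u \<partial>U01) \<partial>Xmeas)"
        using sigma_finite_measure.nn_integral_fst[OF prob_space_imp_sigma_finite[OF prob_U01] Gm2, symmetric] by simp
      also have "\<dots> = (\<integral>\<^sup>+z. indicator A x * ennreal (p x) + ennreal (1 - p x) * indicator A z \<partial>Xmeas)"
        by (intro nn_integral_cong) (simp add: G_def U_if p01[OF x'] mult.commute)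
      also have "\<dots> = (\<integral>\<^sup>+z. indicator A x * ennreal (p x) \<partial>(Xmeas :: 'a measure)) + (\<integral>\<^sup>+z. ennreal (1 - p x) * indicator A z \<partial>Xmeas)"
        by (rule nn_integral_add) auto
      also have "\<dots> = indicator A x * ennreal (p x) + ennreal (1 - p x) * emeasure Xmeas A"
        by (simp only: nn_integral_const nn_integral_cmult_indicator[OF A] X.emeasure_space_1 mult_1_right)
      also have "\<dots> = indicator A x * ennreal (p x) + emeasure Xmeas A * ennreal (1 - p x)"
        by (simp only: mult.commute[of "ennreal (1 - p x)"])
      finally show "(\<integral>\<^sup>+y. G A x (fst y) (snd y) \<partial>((Xmeas :: 'a measure) \<Otimes>\<^sub>M U01))
         = indicator A x * ennreal (p x) + emeasure Xmeas A * ennreal (1 - p x)" .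
    qed
    also have "\<dots> = emeasure (density Xmeas (\<lambda>x. ennreal (exp (f x) / Zf f))) A"
    proof -
      define m where "m = measure Xmeas A"
      have em: "emeasure Xmeas A = ennreal m" unfolding m_def by (rule X.emeasure_eq_measure)
      have m01: "0 \<le> m" "m \<le> 1" unfolding m_def by (auto simp: X.prob_le_1)
      have bnd: "AE x in Xmeas. norm (g x) \<le> B" if "\<And>x. x \<in> Xdom \<Longrightarrow> \<bar>g x\<bar> \<le> B" for g :: "'a \<Rightarrow> real" and B
        using that by (auto simp: space_Xmeas)
      have ie: "integrable Xmeas (\<lambda>x. exp (f x))"
        by (rule X.integrable_const_bound[where B="5/3", OF bnd]) (auto dest: b)
      have iei: "integrable Xmeas (\<lambda>x. exp (f x) * indicator A x)"
        by (rule X.integrable_const_bound[where B="5/3", OF bnd]) (auto dest: b simp: indicator_def)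
      have ii: "integrable Xmeas (\<lambda>x. indicator A x :: real)"
        by (rule X.integrable_const_bound[where B="1", OF bnd]) (auto simp: indicator_def)
      have mp: "m * (1 - p x) \<le> 1" "0 \<le> m * (1 - p x)" if "x \<in> Xdom" for x
        using p01[OF that] m01 by (auto intro: mult_le_one)
      have il: "integrable Xmeas (\<lambda>x. indicator A x * p x + m * (1 - p x))"
      proof (rule X.integrable_const_bound[where B="2", OF bnd])
        fix x :: 'a assume x: "x \<in> Xdom"
        show "\<bar>indicator A x * p x + m * (1 - p x)\<bar> \<le> 2"
          using p01[OF x] mp[OF x] by (cases "x \<in> A") auto
      qed simp
      have Zi: "(\<integral>x. exp (f x) \<partial>Xmeas) = 1" using Z by (simp add: Zf_def)
      have "(\<integral>\<^sup>+x. indicator A x * ennreal (p x) + emeasure Xmeas A * ennreal (1 - p x) \<partial>Xmeas)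
          = (\<integral>\<^sup>+x. ennreal (indicator A x * p x + m * (1 - p x)) \<partial>Xmeas)"
      proof (intro nn_integral_cong)
        fix x :: 'a assume "x \<in> space Xmeas"
        then have x: "x \<in> Xdom" by (simp add: space_Xmeas)
        have e1: "ennreal m * ennreal (1 - p x) = ennreal (m * (1 - p x))"
          using p01[OF x] m01 by (simp add: ennreal_mult)
        have e2: "ennreal (p x) + ennreal (m * (1 - p x)) = ennreal (p x + m * (1 - p x))"
          using p01[OF x] m01 mp[OF x] by (simp add: ennreal_plus)
        show "indicator A x * ennreal (p x) + emeasure Xmeas A * ennreal (1 - p x) =
            ennreal (indicator A x * p x + m * (1 - p x))"
          using e1 e2 by (cases "x \<in> A") (simp_all add: em)
      qed
      also have "\<dots> = ennreal (\<integral>x. indicator A x * p x + m * (1 - p x) \<partial>Xmeas)"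
        using p01 m01 by (intro nn_integral_eq_integral il) (auto simp: space_Xmeas indicator_def)
      also have "(\<integral>x. indicator A x * p x + m * (1 - p x) \<partial>Xmeas)
          = (\<integral>x. exp (f x) * indicator A x + ((5/3) * m - (2/3) * indicator A x - m * exp (f x)) \<partial>Xmeas)"
        by (rule arg_cong[where f="integral\<^sup>L Xmeas"]) (auto simp: fun_eq_iff p_def algebra_simps)
      also have "\<dots> = (\<integral>x. exp (f x) * indicator A x \<partial>Xmeas)"
        using ie iei ii Zi by (simp add: m_def X.prob_space)
      also have "ennreal (\<integral>x. exp (f x) * indicator A x \<partial>Xmeas) = (\<integral>\<^sup>+x. ennreal (exp (f x) * indicator A x) \<partial>Xmeas)"
        by (rule nn_integral_eq_integral[symmetric, OF iei]) auto
      also have "\<dots> = emeasure (density Xmeas (\<lambda>x. ennreal (exp (f x) / Zf f))) A"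
        by (subst emeasure_density) (auto simp: Z indicator_def intro!: nn_integral_cong)
      finally show ?thesis .
    qed
    finally show "emeasure (distr MM Xmeas (hh f)) A = emeasure (density Xmeas (\<lambda>x. ennreal (exp (f x) / Zf f))) A" .
  qed
qed


lemma F_props:
  fixes f :: "'a::euclidean_space \<Rightarrow> real"
  assumes "f \<in> F_prop11"
  shows "f \<in> borel_measurable Xmeas" "\<And>x. x \<in> Xdom \<Longrightarrow> 2/3 \<le> exp (f x) \<and> exp (f x) \<le> 5/3" "Zf f = 1"
proof -
  interpret X: prob_space "Xmeas :: 'a measure" by (rule prob_Xmeas)
  have c: "continuous_on Xdom f" and bd: "\<And>x. x \<in> Xdom \<Longrightarrow> \<bar>f x\<bar> \<le> ln (3/2)" and L: "Lf f = 0"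
    using assms by (auto simp: F_prop11_def)
  have "f \<in> borel_measurable (restrict_space borel Xdom)"
    by (rule borel_measurable_continuous_on_restrict[OF c])
  moreover have "sets (Xmeas :: 'a measure) = sets (restrict_space borel Xdom)"
    unfolding Xmeas_def by (rule sets_restrict_space_cong) simp
  ultimately show fm: "f \<in> borel_measurable Xmeas"
    using measurable_cong_sets by blast
  show b: "2/3 \<le> exp (f x) \<and> exp (f x) \<le> 5/3" if x: "x \<in> Xdom" for x
  proof -
    have "- ln (3/2) \<le> f x" "f x \<le> ln (3/2)" using bd[OF x] by auto
    then have "exp (- ln (3/2)) \<le> exp (f x)" "exp (f x) \<le> exp (ln (3/2))" by (simp_all only: exp_le_cancel_iff)
    moreover have "exp (- ln (3/2::real)) = 2/3" by (simp add: exp_minus)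
    ultimately show ?thesis by simp
  qed
  have ie: "integrable Xmeas (\<lambda>x. exp (f x))"
  proof (rule X.integrable_const_bound[where B="5/3"])
    show "AE x in Xmeas. norm (exp (f x)) \<le> 5/3" using b by (auto simp: space_Xmeas)
  qed (use fm in measurable)
  have "2/3 \<le> Zf f" unfolding Zf_def
    by (rule X.integral_ge_const[OF ie]) (use b in \<open>auto simp: space_Xmeas\<close>)
  then show "Zf f = 1" using L unfolding Lf_def by simp
qed

lemma zero_in_F: "(\<lambda>x. 0) \<in> (F_prop11 :: ('a::euclidean_space \<Rightarrow> real) set)"
proof -
  interpret X: prob_space "Xmeas :: 'a measure" by (rule prob_Xmeas)
  show ?thesis by (simp add: F_prop11_def Lf_def Zf_def X.prob_space)
qed

lemma D_alg_zero:
  fixes f :: "'a::euclidean_space \<Rightarrow> real"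
  assumes n: "n \<ge> 1" and fF: "f \<in> F_prop11"
  shows "D_sup_log (S_samp f) (alg_dist n (OmA TYPE('a)) psiA phiA f) = 0"
proof -
  note fp = F_props[OF fF]
  have eq: "alg_dist n (OmA TYPE('a)) psiA phiA f = S_samp f"
    using dist_eq[OF n fp(1)] key[OF fp(1) fp(2) fp(3)] by (simp add: S_samp_def Pf_def)
  have "prob_space (distr (MM :: ('a \<times> 'a \<times> real) measure) Xmeas (hh f))"
    by (rule prob_space.prob_space_distr[OF prob_MM hh_meas[OF fp(1)]])
  then have "prob_space (S_samp f)" using eq dist_eq[OF n fp(1)] by simp
  then show ?thesis using eq D_self by simp
qed

theorem proposition11:
  fixes n :: nat
  assumes "n \<ge> 1"
  shows "e_ad_stoch n (F_prop11 :: ('a::euclidean_space \<Rightarrow> real) set) S_samp D_sup_log = 0"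
proof (rule antisym)
  have "e_ad_stoch n (F_prop11 :: ('a::euclidean_space \<Rightarrow> real) set) S_samp D_sup_log
      \<le> (SUP f \<in> (F_prop11 :: ('a \<Rightarrow> real) set). D_sup_log (S_samp f) (alg_dist n (OmA TYPE('a)) psiA phiA f))"
    unfolding e_ad_stoch_def
    by (rule INF_lower2[OF alg_in[OF assms]]) simp
  also have "\<dots> \<le> 0"
    by (rule SUP_least) (simp add: D_alg_zero[OF assms])
  finally show "e_ad_stoch n (F_prop11 :: ('a::euclidean_space \<Rightarrow> real) set) S_samp D_sup_log \<le> 0" .
next
  show "0 \<le> e_ad_stoch n (F_prop11 :: ('a::euclidean_space \<Rightarrow> real) set) S_samp D_sup_log"
    unfolding e_ad_stoch_def
  proof (rule INF_greatest)
    fix A assume A: "A \<in> (ad_stoch_algs n :: (_ \<times> _ \<times> (_ \<Rightarrow> _ \<Rightarrow> 'a)) set)"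
    obtain \<Omega> psi phi where Ae: "A = (\<Omega>, psi, phi)" by (cases A) auto
    have ps: "prob_space \<Omega>" and
      ms: "alg_sample n psi phi (\<lambda>x::'a. 0) \<in> measurable \<Omega> Xmeas"
      using A unfolding Ae ad_stoch_algs_def by auto
    have "prob_space (alg_dist n \<Omega> psi phi (\<lambda>x::'a. 0))"
      unfolding alg_dist_def by (rule prob_space.prob_space_distr[OF ps ms])
    then have "0 \<le> D_sup_log (S_samp (\<lambda>x::'a. 0)) (alg_dist n \<Omega> psi phi (\<lambda>x. 0))"
      by (rule D_nonneg)
    also have "\<dots> \<le> (SUP f \<in> (F_prop11 :: ('a \<Rightarrow> real) set). D_sup_log (S_samp f) (alg_dist n \<Omega> psi phi f))"
      by (rule SUP_upper[OF zero_in_F])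
    finally show "0 \<le> (case A of (\<Omega>, psi, phi) \<Rightarrow> SUP f \<in> (F_prop11 :: ('a \<Rightarrow> real) set). D_sup_log (S_samp f) (alg_dist n \<Omega> psi phi f))"
      by (simp add: Ae)
  qed
qed

end
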